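(* Consider the following setting. A ReLU neural network with input $x\in\mathbb{R}^{n_x}$ has hidden layers $\hat{x}^{(1)}=\sigma(\bm{W}^{(0)}x+b^{(0)})$, $\hat{x}^{(\ell+1)}=\sigma(\bm{W}^{(\ell)}\hat{x}^{(\ell)}+b^{(\ell)})$ for $\ell=1,\dots,n-1$, and output $y=\bm{W}^{(n)}\hat{x}^{(n)}+b^{(n)}$, where $\sigma(z)=\max(z,0)$ componentwise. Write $z^{(0)}=x$ and $z^{(\ell)}=\hat{x}^{(\ell)}$ for $\ell\ge1$ (the input of layer $\ell$). Let $\beta=(\beta^{(1)},\dots,\beta^{(n)})$ with $\beta^{(\ell)}$ of the same dimension as $\hat{x}^{(\ell)}$, let $\hat{x}=(\hat{x}^{(1)},\dots,\hat{x}^{(n)})$, and let $u=(x,\hat{x},\beta)\in\mathbb{R}^{t}$. Fix diagonal constant matrices $\bm{M}^{\min,(\ell)},\bm{M}^{\max,(\ell)}$, a matrix $\bm{A}_x$ and vector $b_x$, a vector $p$, a symmetric matrix $\bm{M}_i$, and the $i$-th standard basis vector $s_i$. Let $\bm{A}u-b\ge0$ denote the aggregate of the linear constraints: (a) $\bm{A}_x x-b_x\ge0$; (b) $0\le\beta\le 1$; (c) for each $\ell=1,\dots,n$: $\hat{x}^{(\ell)}\ge \bm{W}^{(\ell-1)}z^{(\ell-1)}+b^{(\ell-1)}$, $\hat{x}^{(\ell)}\ge0$, $\hat{x}^{(\ell)}\le \bm{W}^{(\ell-1)}z^{(\ell-1)}+b^{(\ell-1)}-\bm{M}^{\min,(\ell)}(\mathbf{1}-\beta^{(\ell)})$,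 $\hat{x}^{(\ell)}\le \bm{M}^{\max,(\ell)}\beta^{(\ell)}$; (d) $\bm{W}^{(n)}\hat{x}^{(n)}+b^{(n)}-p\ge0$; here $\bm{A}\in\mathbb{R}^{N\times t}$. The MIQP value is $$e_i^{\star}=\sup\{\,x^{T}\bm{M}_i x-s_i^{T}(\bm{W}^{(n)}\hat{x}^{(n)}+b^{(n)}) : \bm{A}u-b\ge0,\ \beta\in\{0,1\}^{d}\,\}.$$ For a subset $\mathcal{S}_c\subseteq\mathcal{S}=\{1,\dots,N\}^2$, let $\tilde{e}_i^{\star}(\mathcal{S}_c)$ be the optimal value (supremum) of the following SDP over symmetric matrices $$\hat{\bm{\Gamma}}=\begin{bmatrix}1 & x^{T} & \hat{x}^{T} & \beta^{T}\\ x & \bm{X} & \bm{\epsilon} & \bm{\gamma}\\ \hat{x} & \bm{\epsilon}^{T} & \bm{\eta} & \bm{\delta}\\ \beta & \bm{\gamma}^{T} & \bm{\delta}^{T} & \bm{B}\end{bmatrix}\succeq0,\qquad \bm{\Gamma}=\text{lower-right }t\times t\text{ block},$$ maximizing $\operatorname{tr}(\bm{M}_i\bm{X})-s_i^{T}(\bm{W}^{(n)}\hat{x}^{(n)}+b^{(n)})$ subject to: $\bm{A}u-b\ge0$; $\bm{\Omega}(\bm{\Gamma},u)_{j,k}\ge0$ for all $(j,k)\in\mathcal{S}_c$, where $\bm{\Omega}(\bm{\Gamma},u)=\bm{A}\bm{\Gamma}\bm{A}^{T}-\bm{A}ub^{T}-bu^{T}\bm{A}^{T}+bb^{T}$; $\operatorname{diag}(\bm{B})=\beta$;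 $\operatorname{diag}(\bm{\delta})=\hat{x}$ (i.e. the entry of $\hat{\bm\Gamma}$ in the row of $\hat{x}_k$ and column of the binary $\beta_k$ paired with the same neuron equals $\hat{x}_k$); and for every layer $\ell$ and neuron $k$, the entry of $\hat{\bm\Gamma}$ indexed by $(\hat{x}^{(\ell)}_k,\hat{x}^{(\ell)}_k)$ equals $\sum_j \bm{W}^{(\ell-1)}_{k,j}\,[\hat{\bm\Gamma}]_{(\hat{x}^{(\ell)}_k,\, z^{(\ell-1)}_j)}+b^{(\ell-1)}_k\hat{x}^{(\ell)}_k$. The Sequential Targeted Tightening algorithm produces nested index sets $\mathcal{S}_{c,[0]}\subseteq\mathcal{S}_{c,[1]}\subseteq\cdots$ (at each iteration, adding to the current set some indices $(j,k)$ at which the current SDP solution has $\bm\Omega_{j,k}<0$), and the performance guarantee at iteration $j$ is $\tilde{e}_{i,[j]}^{\star}=\tilde{e}_i^{\star}(\mathcal{S}_{c,[j]})$. Then for every iteration $j>0$, $$\tilde{e}_{i,[j-1]}^{\star}\ \ge\ \tilde{e}_{i,[j]}^{\star}\ \ge\ e_i^{\star}.$$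
   Context: $\succeq0$ denotes positive semidefiniteness; inequalities between vectors/matrices are componentwise; $\mathbf{1}$ is the all-ones vector; $d$ is the total number of binary variables (equal to the total number of hidden neurons). Optimal values are taken in the extended reals. *)

theory Defs
  imports Complex_Main "HOL-Library.Extended_Real"
begin

(* Variables of u = (x, xhat, beta):
   Xv j      : x_j            (j < w 0 = n_x)
   Hv l k    : xhat^(l)_k     (1 <= l <= n, k < w l)
   Bv l k    : beta^(l)_k     (1 <= l <= n, k < w l) *)
datatype var = Xv nat | Hv nat nat | Bv nat nat

(* Rows of the aggregate linear system A u - b >= 0 *)
datatype con =
    CA nat            (* (a)  row r of A_x x - b_x >= 0 *)
  | CBlo nat nat      (* (b)  beta^(l)_k >= 0 *)
  | CBhi nat nat      (* (b)  1 - beta^(l)_k >= 0 *)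
  | C1 nat nat        (* (c)  xhat >= W z + b *)
  | C2 nat nat        (* (c)  xhat >= 0 *)
  | C3 nat nat        (* (c)  xhat <= W z + b - Mmin (1 - beta) *)
  | C4 nat nat        (* (c)  xhat <= Mmax beta *)
  | CD nat            (* (d)  row r of W^(n) xhat^(n) + b^(n) - p >= 0 *)

definition Vars :: "(nat \<Rightarrow> nat) \<Rightarrow> nat \<Rightarrow> var set" where
  "Vars w n = {Xv j | j. j < w 0} \<union> {Hv l k | l k. 1 \<le> l \<and> l \<le> n \<and> k < w l}
              \<union> {Bv l k | l k. 1 \<le> l \<and> l \<le> n \<and> k < w l}"

definition BinVars :: "(nat \<Rightarrow> nat) \<Rightarrow> nat \<Rightarrow> var set" where
  "BinVars w n = {Bv l k | l k. 1 \<le> l \<and> l \<le> n \<and> k < w l}"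

definition Cons :: "(nat \<Rightarrow> nat) \<Rightarrow> nat \<Rightarrow> nat \<Rightarrow> nat \<Rightarrow> con set" where
  "Cons w n mx ny = {CA r | r. r < mx}
     \<union> {CBlo l k | l k. 1 \<le> l \<and> l \<le> n \<and> k < w l}
     \<union> {CBhi l k | l k. 1 \<le> l \<and> l \<le> n \<and> k < w l}
     \<union> {C1 l k | l k. 1 \<le> l \<and> l \<le> n \<and> k < w l}
     \<union> {C2 l k | l k. 1 \<le> l \<and> l \<le> n \<and> k < w l}
     \<union> {C3 l k | l k. 1 \<le> l \<and> l \<le> n \<and> k < w l}
     \<union> {C4 l k | l k. 1 \<le> l \<and> l \<le> n \<and> k < w l}
     \<union> {CD r | r. r < ny}"

definition ind :: "var \<Rightarrow> var \<Rightarrow> real" where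
  "ind a v = (if v = a then 1 else 0)"

definition zv :: "nat \<Rightarrow> nat \<Rightarrow> var" where
  "zv l j = (if l = 0 then Xv j else Hv l j)"

definition acoef ::
  "(nat \<Rightarrow> nat) \<Rightarrow> nat \<Rightarrow> (nat \<Rightarrow> nat \<Rightarrow> nat \<Rightarrow> real) \<Rightarrow> (nat \<Rightarrow> nat \<Rightarrow> real)
   \<Rightarrow> (nat \<Rightarrow> nat \<Rightarrow> real) \<Rightarrow> (nat \<Rightarrow> nat \<Rightarrow> real) \<Rightarrow> con \<Rightarrow> var \<Rightarrow> real" where
  "acoef w n W Ax Mmin Mmax c v = (case c of
      CA r \<Rightarrow> (\<Sum>j<w 0. Ax r j * ind (Xv j) v)
    | CBlo l k \<Rightarrow> ind (Bv l k) v
    | CBhi l k \<Rightarrow> - ind (Bv l k) v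
    | C1 l k \<Rightarrow> ind (Hv l k) v - (\<Sum>j<w (l-1). W (l-1) k j * ind (zv (l-1) j) v)
    | C2 l k \<Rightarrow> ind (Hv l k) v
    | C3 l k \<Rightarrow> (\<Sum>j<w (l-1). W (l-1) k j * ind (zv (l-1) j) v)
                 + Mmin l k * ind (Bv l k) v - ind (Hv l k) v
    | C4 l k \<Rightarrow> Mmax l k * ind (Bv l k) v - ind (Hv l k) v
    | CD r \<Rightarrow> (\<Sum>j<w n. W n r j * ind (Hv n j) v))"

definition bcoef ::
  "nat \<Rightarrow> (nat \<Rightarrow> nat \<Rightarrow> real) \<Rightarrow> (nat \<Rightarrow> real) \<Rightarrow> (nat \<Rightarrow> nat \<Rightarrow> real)
   \<Rightarrow> (nat \<Rightarrow> real) \<Rightarrow> con \<Rightarrow> real" where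
  "bcoef n b bx Mmin p c = (case c of
      CA r \<Rightarrow> bx r
    | CBlo l k \<Rightarrow> 0
    | CBhi l k \<Rightarrow> -1
    | C1 l k \<Rightarrow> b (l-1) k
    | C2 l k \<Rightarrow> 0
    | C3 l k \<Rightarrow> Mmin l k - b (l-1) k
    | C4 l k \<Rightarrow> 0
    | CD r \<Rightarrow> p r - b n r)"

definition Au ::
  "(nat \<Rightarrow> nat) \<Rightarrow> nat \<Rightarrow> (nat \<Rightarrow> nat \<Rightarrow> nat \<Rightarrow> real) \<Rightarrow> (nat \<Rightarrow> nat \<Rightarrow> real)
   \<Rightarrow> (nat \<Rightarrow> nat \<Rightarrow> real) \<Rightarrow> (nat \<Rightarrow> nat \<Rightarrow> real) \<Rightarrow> con \<Rightarrow> (var \<Rightarrow> real) \<Rightarrow> real" where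
  "Au w n W Ax Mmin Mmax c u = (\<Sum>v\<in>Vars w n. acoef w n W Ax Mmin Mmax c v * u v)"

definition lin_feasible ::
  "(nat \<Rightarrow> nat) \<Rightarrow> nat \<Rightarrow> (nat \<Rightarrow> nat \<Rightarrow> nat \<Rightarrow> real) \<Rightarrow> (nat \<Rightarrow> nat \<Rightarrow> real)
   \<Rightarrow> (nat \<Rightarrow> nat \<Rightarrow> real) \<Rightarrow> (nat \<Rightarrow> real) \<Rightarrow> nat \<Rightarrow> (nat \<Rightarrow> nat \<Rightarrow> real)
   \<Rightarrow> (nat \<Rightarrow> nat \<Rightarrow> real) \<Rightarrow> (nat \<Rightarrow> real) \<Rightarrow> nat \<Rightarrow> (var \<Rightarrow> real) \<Rightarrow> bool" where
  "lin_feasible w n W b Ax bx mx Mmin Mmax p ny u \<longleftrightarrow>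
     (\<forall>c\<in>Cons w n mx ny. Au w n W Ax Mmin Mmax c u - bcoef n b bx Mmin p c \<ge> 0)"

definition Omega ::
  "(nat \<Rightarrow> nat) \<Rightarrow> nat \<Rightarrow> (nat \<Rightarrow> nat \<Rightarrow> nat \<Rightarrow> real) \<Rightarrow> (nat \<Rightarrow> nat \<Rightarrow> real)
   \<Rightarrow> (nat \<Rightarrow> nat \<Rightarrow> real) \<Rightarrow> (nat \<Rightarrow> real) \<Rightarrow> (nat \<Rightarrow> nat \<Rightarrow> real)
   \<Rightarrow> (nat \<Rightarrow> nat \<Rightarrow> real) \<Rightarrow> (nat \<Rightarrow> real)
   \<Rightarrow> (var \<Rightarrow> var \<Rightarrow> real) \<Rightarrow> (var \<Rightarrow> real) \<Rightarrow> con \<Rightarrow> con \<Rightarrow> real" where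
  "Omega w n W b Ax bx Mmin Mmax p G u c d =
     (\<Sum>v\<in>Vars w n. \<Sum>v'\<in>Vars w n.
         acoef w n W Ax Mmin Mmax c v * G v v' * acoef w n W Ax Mmin Mmax d v')
     - Au w n W Ax Mmin Mmax c u * bcoef n b bx Mmin p d
     - bcoef n b bx Mmin p c * Au w n W Ax Mmin Mmax d u
     + bcoef n b bx Mmin p c * bcoef n b bx Mmin p d"

definition psd_on :: "'i set \<Rightarrow> ('i \<Rightarrow> 'i \<Rightarrow> real) \<Rightarrow> bool" where
  "psd_on I M \<longleftrightarrow> (\<forall>i\<in>I. \<forall>j\<in>I. M i j = M j i)
                 \<and> (\<forall>y. 0 \<le> (\<Sum>i\<in>I. \<Sum>j\<in>I. y i * M i j * y j))"

(* Gamma-hat = [1 u^T; u Gamma], row/column None is the leading "1" *)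
definition Ghat :: "(var \<Rightarrow> real) \<Rightarrow> (var \<Rightarrow> var \<Rightarrow> real) \<Rightarrow> var option \<Rightarrow> var option \<Rightarrow> real" where
  "Ghat u G r s = (case (r, s) of
      (None, None) \<Rightarrow> 1
    | (None, Some v) \<Rightarrow> u v
    | (Some v, None) \<Rightarrow> u v
    | (Some v, Some v') \<Rightarrow> G v v')"

definition miqp_obj ::
  "(nat \<Rightarrow> nat) \<Rightarrow> nat \<Rightarrow> (nat \<Rightarrow> nat \<Rightarrow> nat \<Rightarrow> real) \<Rightarrow> (nat \<Rightarrow> nat \<Rightarrow> real)
   \<Rightarrow> (nat \<Rightarrow> nat \<Rightarrow> real) \<Rightarrow> nat \<Rightarrow> (var \<Rightarrow> real) \<Rightarrow> real" where
  "miqp_obj w n W b M i u =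
     (\<Sum>j<w 0. \<Sum>k<w 0. u (Xv j) * M j k * u (Xv k))
     - ((\<Sum>j<w n. W n i j * u (Hv n j)) + b n i)"

definition sdp_obj ::
  "(nat \<Rightarrow> nat) \<Rightarrow> nat \<Rightarrow> (nat \<Rightarrow> nat \<Rightarrow> nat \<Rightarrow> real) \<Rightarrow> (nat \<Rightarrow> nat \<Rightarrow> real)
   \<Rightarrow> (nat \<Rightarrow> nat \<Rightarrow> real) \<Rightarrow> nat \<Rightarrow> (var \<Rightarrow> var \<Rightarrow> real) \<Rightarrow> (var \<Rightarrow> real) \<Rightarrow> real" where
  "sdp_obj w n W b M i G u =
     (\<Sum>j<w 0. \<Sum>k<w 0. M j k * G (Xv k) (Xv j))
     - ((\<Sum>j<w n. W n i j * u (Hv n j)) + b n i)"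

definition e_star ::
  "(nat \<Rightarrow> nat) \<Rightarrow> nat \<Rightarrow> (nat \<Rightarrow> nat \<Rightarrow> nat \<Rightarrow> real) \<Rightarrow> (nat \<Rightarrow> nat \<Rightarrow> real)
   \<Rightarrow> (nat \<Rightarrow> nat \<Rightarrow> real) \<Rightarrow> (nat \<Rightarrow> real) \<Rightarrow> nat \<Rightarrow> (nat \<Rightarrow> nat \<Rightarrow> real)
   \<Rightarrow> (nat \<Rightarrow> nat \<Rightarrow> real) \<Rightarrow> (nat \<Rightarrow> real) \<Rightarrow> nat
   \<Rightarrow> (nat \<Rightarrow> nat \<Rightarrow> real) \<Rightarrow> nat \<Rightarrow> ereal" where
  "e_star w n W b Ax bx mx Mmin Mmax p ny M i =
     Sup {ereal (miqp_obj w n W b M i u) | u.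
            lin_feasible w n W b Ax bx mx Mmin Mmax p ny u
            \<and> (\<forall>v\<in>BinVars w n. u v = 0 \<or> u v = 1)}"

definition sdp_feasible ::
  "(nat \<Rightarrow> nat) \<Rightarrow> nat \<Rightarrow> (nat \<Rightarrow> nat \<Rightarrow> nat \<Rightarrow> real) \<Rightarrow> (nat \<Rightarrow> nat \<Rightarrow> real)
   \<Rightarrow> (nat \<Rightarrow> nat \<Rightarrow> real) \<Rightarrow> (nat \<Rightarrow> real) \<Rightarrow> nat \<Rightarrow> (nat \<Rightarrow> nat \<Rightarrow> real)
   \<Rightarrow> (nat \<Rightarrow> nat \<Rightarrow> real) \<Rightarrow> (nat \<Rightarrow> real) \<Rightarrow> nat
   \<Rightarrow> (con \<times> con) set \<Rightarrow> (var \<Rightarrow> var \<Rightarrow> real) \<Rightarrow> (var \<Rightarrow> real) \<Rightarrow> bool" where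
  "sdp_feasible w n W b Ax bx mx Mmin Mmax p ny Sc G u \<longleftrightarrow>
     psd_on (insert None (Some ` Vars w n)) (Ghat u G)
     \<and> lin_feasible w n W b Ax bx mx Mmin Mmax p ny u
     \<and> (\<forall>(c, d)\<in>Sc. 0 \<le> Omega w n W b Ax bx Mmin Mmax p G u c d)
     \<and> (\<forall>l k. 1 \<le> l \<and> l \<le> n \<and> k < w l \<longrightarrow>
            G (Bv l k) (Bv l k) = u (Bv l k)
          \<and> G (Hv l k) (Bv l k) = u (Hv l k)
          \<and> G (Hv l k) (Hv l k) =
              (\<Sum>j<w (l-1). W (l-1) k j * G (Hv l k) (zv (l-1) j)) + b (l-1) k * u (Hv l k))"

definition e_tilde ::
  "(nat \<Rightarrow> nat) \<Rightarrow> nat \<Rightarrow> (nat \<Rightarrow> nat \<Rightarrow> nat \<Rightarrow> real) \<Rightarrow> (nat \<Rightarrow> nat \<Rightarrow> real)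
   \<Rightarrow> (nat \<Rightarrow> nat \<Rightarrow> real) \<Rightarrow> (nat \<Rightarrow> real) \<Rightarrow> nat \<Rightarrow> (nat \<Rightarrow> nat \<Rightarrow> real)
   \<Rightarrow> (nat \<Rightarrow> nat \<Rightarrow> real) \<Rightarrow> (nat \<Rightarrow> real) \<Rightarrow> nat
   \<Rightarrow> (nat \<Rightarrow> nat \<Rightarrow> real) \<Rightarrow> nat \<Rightarrow> (con \<times> con) set \<Rightarrow> ereal" where
  "e_tilde w n W b Ax bx mx Mmin Mmax p ny M i Sc =
     Sup {ereal (sdp_obj w n W b M i G u) | G u.
            sdp_feasible w n W b Ax bx mx Mmin Mmax p ny Sc G u}"

end

theory Submission
  imports Defs
begin

lemma sum_ind: "finite V \<Longrightarrow> a \<in> V \<Longrightarrow> (\<Sum>v\<in>V. ind a v * u v) = u a"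
proof -
  assume "finite V" "a \<in> V"
  have "(\<Sum>v\<in>V. ind a v * u v) = (\<Sum>v\<in>V. if v = a then u a else 0)"
    by (rule sum.cong) (auto simp: ind_def)
  thus ?thesis using \<open>finite V\<close> \<open>a \<in> V\<close> by simp
qed

lemma sum_ind_c: "finite V \<Longrightarrow> a \<in> V \<Longrightarrow> (\<Sum>v\<in>V. c * ind a v * u v) = c * u a"
proof -
  assume "finite V" "a \<in> V"
  have "(\<Sum>v\<in>V. c * ind a v * u v) = c * (\<Sum>v\<in>V. ind a v * u v)"
    by (simp add: sum_distrib_left mult.assoc)
  thus ?thesis using sum_ind[OF \<open>finite V\<close> \<open>a \<in> V\<close>] by simp
qed

lemma sum_lin: "finite V \<Longrightarrow> \<forall>j<m. f j \<in> V \<Longrightarrow>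
  (\<Sum>v\<in>V. (\<Sum>j<m. c j * ind (f j) v) * u v) = (\<Sum>j<m. c j * u (f j))"
proof -
  assume fin: "finite V" and f: "\<forall>j<m. f j \<in> V"
  have "(\<Sum>v\<in>V. (\<Sum>j<m. c j * ind (f j) v) * u v) = (\<Sum>v\<in>V. \<Sum>j<m. c j * ind (f j) v * u v)"
    by (simp add: sum_distrib_right)
  also have "\<dots> = (\<Sum>j<m. \<Sum>v\<in>V. c j * ind (f j) v * u v)" by (rule sum.swap)
  also have "\<dots> = (\<Sum>j<m. c j * u (f j))"
    by (rule sum.cong) (auto simp: sum_ind_c fin f)
  finally show ?thesis .
qed

lemma Vars_finite: "finite (Vars w n)"
proof -
  have "Vars w n \<subseteq> Xv ` {..<w 0} \<union> (\<lambda>(l,k). Hv l k) ` (SIGMA l:{1..n}. {..<w l})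
        \<union> (\<lambda>(l,k). Bv l k) ` (SIGMA l:{1..n}. {..<w l})"
    unfolding Vars_def by force
  moreover have "finite (Xv ` {..<w 0} \<union> (\<lambda>(l,k). Hv l k) ` (SIGMA l:{1..n}. {..<w l})
        \<union> (\<lambda>(l,k). Bv l k) ` (SIGMA l:{1..n}. {..<w l}))" by auto
  ultimately show ?thesis by (rule finite_subset)
qed

lemma HV: "1 \<le> l \<Longrightarrow> l \<le> n \<Longrightarrow> k < w l \<Longrightarrow> Hv l k \<in> Vars w n"
  unfolding Vars_def by auto
lemma BV: "1 \<le> l \<Longrightarrow> l \<le> n \<Longrightarrow> k < w l \<Longrightarrow> Bv l k \<in> Vars w n"
  unfolding Vars_def by auto
lemma ZV: "1 \<le> l \<Longrightarrow> l \<le> n \<Longrightarrow> \<forall>j<w (l-1). zv (l-1) j \<in> Vars w n"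
  unfolding Vars_def zv_def by auto

lemma Au_C1: assumes a: "1 \<le> l" "l \<le> n" "k < w l" shows "
  Au w n W Ax Mmin Mmax (C1 l k) u = u (Hv l k) - (\<Sum>j<w (l-1). W (l-1) k j * u (zv (l-1) j))"
  unfolding Au_def acoef_def
  using sum_lin[OF Vars_finite[of w n] ZV[of l n w, OF a(1,2)], where c="W (l-1) k" and u=u]
  by (simp add: left_diff_distrib sum_subtractf sum_ind[OF Vars_finite HV[of l n k w, OF a]])

lemma Au_C2: "1 \<le> l \<Longrightarrow> l \<le> n \<Longrightarrow> k < w l \<Longrightarrow>
  Au w n W Ax Mmin Mmax (C2 l k) u = u (Hv l k)"
  unfolding Au_def acoef_def
  by (simp add: sum_ind Vars_finite HV)

lemma Au_C3: assumes a: "1 \<le> l" "l \<le> n" "k < w l" shows "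
  Au w n W Ax Mmin Mmax (C3 l k) u = (\<Sum>j<w (l-1). W (l-1) k j * u (zv (l-1) j))
     + Mmin l k * u (Bv l k) - u (Hv l k)"
  unfolding Au_def acoef_def
  using sum_lin[OF Vars_finite[of w n] ZV[of l n w, OF a(1,2)], where c="W (l-1) k" and u=u]
  by (simp add: left_diff_distrib distrib_right sum_subtractf sum.distrib sum_ind[OF Vars_finite HV[of l n k w, OF a]]
     sum_ind_c[OF Vars_finite BV[of l n k w, OF a]])

lemma Au_C4: "1 \<le> l \<Longrightarrow> l \<le> n \<Longrightarrow> k < w l \<Longrightarrow>
  Au w n W Ax Mmin Mmax (C4 l k) u = Mmax l k * u (Bv l k) - u (Hv l k)"
  unfolding Au_def acoef_def
  by (simp add: left_diff_distrib sum_subtractf sum_ind sum_ind_c Vars_finite HV BV)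

lemma Cons_mem: "1 \<le> l \<Longrightarrow> l \<le> n \<Longrightarrow> k < w l \<Longrightarrow>
  C1 l k \<in> Cons w n mx ny \<and> C2 l k \<in> Cons w n mx ny \<and> C3 l k \<in> Cons w n mx ny \<and> C4 l k \<in> Cons w n mx ny"
  unfolding Cons_def by auto

lemma Ghat_rank1:
  "Ghat u (\<lambda>v v'. u v * u v') r s = (case r of None \<Rightarrow> 1 | Some v \<Rightarrow> u v) * (case s of None \<Rightarrow> 1 | Some v \<Rightarrow> u v)"
  unfolding Ghat_def by (cases r; cases s; simp)

lemma psd_rank1: "psd_on I (Ghat u (\<lambda>v v'. u v * u v'))"
proof -
  define f where "f = (\<lambda>r. case r of None \<Rightarrow> 1 | Some v \<Rightarrow> u v)"
  have "\<And>y. (\<Sum>a\<in>I. \<Sum>c\<in>I. y a * Ghat u (\<lambda>v v'. u v * u v') a c * y c) = (\<Sum>a\<in>I. y a * f a)^2"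
    unfolding Ghat_rank1 f_def[symmetric] power2_eq_square sum_product
    by (simp add: mult_ac)
  thus ?thesis unfolding psd_on_def by (simp add: Ghat_rank1 mult.commute)
qed

lemma Omega_rank1:
  "Omega w n W b Ax bx Mmin Mmax p (\<lambda>v v'. u v * u v') u c d =
   (Au w n W Ax Mmin Mmax c u - bcoef n b bx Mmin p c) * (Au w n W Ax Mmin Mmax d u - bcoef n b bx Mmin p d)"
proof -
  have "(\<Sum>v\<in>Vars w n. \<Sum>v'\<in>Vars w n.
         acoef w n W Ax Mmin Mmax c v * (u v * u v') * acoef w n W Ax Mmin Mmax d v')
        = Au w n W Ax Mmin Mmax c u * Au w n W Ax Mmin Mmax d u"
    unfolding Au_def sum_product by (simp add: mult_ac)
  thus ?thesis unfolding Omega_def by (simp add: algebra_simps)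
qed

theorem theorem1:
  fixes w :: "nat \<Rightarrow> nat" and n :: nat
    and W :: "nat \<Rightarrow> nat \<Rightarrow> nat \<Rightarrow> real" and b :: "nat \<Rightarrow> nat \<Rightarrow> real"
    and Ax :: "nat \<Rightarrow> nat \<Rightarrow> real" and bx :: "nat \<Rightarrow> real" and mx :: nat
    and Mmin Mmax :: "nat \<Rightarrow> nat \<Rightarrow> real" and p :: "nat \<Rightarrow> real" and ny :: nat
    and M :: "nat \<Rightarrow> nat \<Rightarrow> real" and i :: nat
    and Sc :: "nat \<Rightarrow> (con \<times> con) set" and j :: nat
  assumes "1 \<le> n"
    and "i < ny"
    and "\<forall>a c. a < w 0 \<longrightarrow> c < w 0 \<longrightarrow> M a c = M c a"
    and "\<forall>m. Sc m \<subseteq> Cons w n mx ny \<times> Cons w n mx ny"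
    and "\<forall>m. Sc m \<subseteq> Sc (Suc m)"
    and "\<forall>m. \<forall>cd \<in> Sc (Suc m) - Sc m. \<exists>G u.
            sdp_feasible w n W b Ax bx mx Mmin Mmax p ny (Sc m) G u
          \<and> ereal (sdp_obj w n W b M i G u) = e_tilde w n W b Ax bx mx Mmin Mmax p ny M i (Sc m)
          \<and> Omega w n W b Ax bx Mmin Mmax p G u (fst cd) (snd cd) < 0"
    and "0 < j"
  shows "e_tilde w n W b Ax bx mx Mmin Mmax p ny M i (Sc (j - 1))
           \<ge> e_tilde w n W b Ax bx mx Mmin Mmax p ny M i (Sc j)
       \<and> e_tilde w n W b Ax bx mx Mmin Mmax p ny M i (Sc j)
           \<ge> e_star w n W b Ax bx mx Mmin Mmax p ny M i"
proof
  have s1: "Sc (j - 1) \<subseteq> Sc (Suc (j - 1))" using assms(5) by blast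
  have "Suc (j - 1) = j" using assms(7) by simp
  hence sub: "Sc (j - 1) \<subseteq> Sc j" using s1 by simp
  show "e_tilde w n W b Ax bx mx Mmin Mmax p ny M i (Sc (j - 1))
           \<ge> e_tilde w n W b Ax bx mx Mmin Mmax p ny M i (Sc j)"
    unfolding e_tilde_def
  proof (rule Sup_subset_mono, safe)
    fix G u assume "sdp_feasible w n W b Ax bx mx Mmin Mmax p ny (Sc j) G u"
    hence "sdp_feasible w n W b Ax bx mx Mmin Mmax p ny (Sc (j-1)) G u"
      unfolding sdp_feasible_def using sub by blast
    thus "\<exists>G' u'. ereal (sdp_obj w n W b M i G u) = ereal (sdp_obj w n W b M i G' u') \<and>
           sdp_feasible w n W b Ax bx mx Mmin Mmax p ny (Sc (j-1)) G' u'" by blast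
  qed
  show "e_tilde w n W b Ax bx mx Mmin Mmax p ny M i (Sc j)
           \<ge> e_star w n W b Ax bx mx Mmin Mmax p ny M i"
    unfolding e_tilde_def e_star_def
  proof (rule Sup_subset_mono, safe)
    fix u assume lf: "lin_feasible w n W b Ax bx mx Mmin Mmax p ny u"
      and bin: "\<forall>v\<in>BinVars w n. u v = 0 \<or> u v = 1"
    define G where "G = (\<lambda>v v'. u v * u v')"
    have obj: "sdp_obj w n W b M i G u = miqp_obj w n W b M i u"
      unfolding sdp_obj_def miqp_obj_def G_def by (simp add: mult_ac)
    have om: "\<forall>(c, d)\<in>Sc j. 0 \<le> Omega w n W b Ax bx Mmin Mmax p G u c d"
    proof safe
      fix c d assume "(c,d) \<in> Sc j"
      hence "c \<in> Cons w n mx ny" "d \<in> Cons w n mx ny" using assms(4) by auto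
      thus "0 \<le> Omega w n W b Ax bx Mmin Mmax p G u c d"
        using lf unfolding G_def Omega_rank1 lin_feasible_def by simp
    qed
    have diag: "G (Bv l k) (Bv l k) = u (Bv l k)
          \<and> G (Hv l k) (Bv l k) = u (Hv l k)
          \<and> G (Hv l k) (Hv l k) =
              (\<Sum>j<w (l-1). W (l-1) k j * G (Hv l k) (zv (l-1) j)) + b (l-1) k * u (Hv l k)"
      if l: "1 \<le> l" "l \<le> n" "k < w l" for l k
    proof -
      have B: "u (Bv l k) = 0 \<or> u (Bv l k) = 1" using bin l unfolding BinVars_def by auto
      define S where "S = (\<Sum>j<w (l-1). W (l-1) k j * u (zv (l-1) j))"
      have "Au w n W Ax Mmin Mmax (C1 l k) u - bcoef n b bx Mmin p (C1 l k) \<ge> 0"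
        using lf Cons_mem[where w=w and mx=mx and ny=ny, OF l] unfolding lin_feasible_def by blast
      hence c1: "u (Hv l k) - S - b (l-1) k \<ge> 0"
        by (simp add: Au_C1[where w=w, OF l] bcoef_def S_def)
      have "Au w n W Ax Mmin Mmax (C2 l k) u - bcoef n b bx Mmin p (C2 l k) \<ge> 0"
        using lf Cons_mem[where w=w and mx=mx and ny=ny, OF l] unfolding lin_feasible_def by blast
      hence c2: "u (Hv l k) \<ge> 0"
        by (simp add: Au_C2[where w=w, OF l] bcoef_def )
      have "Au w n W Ax Mmin Mmax (C3 l k) u - bcoef n b bx Mmin p (C3 l k) \<ge> 0"
        using lf Cons_mem[where w=w and mx=mx and ny=ny, OF l] unfolding lin_feasible_def by blast
      hence c3: "S + Mmin l k * u (Bv l k) - u (Hv l k) - (Mmin l k - b (l-1) k) \<ge> 0"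
        by (simp add: Au_C3[where w=w, OF l] bcoef_def S_def)
      have "Au w n W Ax Mmin Mmax (C4 l k) u - bcoef n b bx Mmin p (C4 l k) \<ge> 0"
        using lf Cons_mem[where w=w and mx=mx and ny=ny, OF l] unfolding lin_feasible_def by blast
      hence c4: "Mmax l k * u (Bv l k) - u (Hv l k) \<ge> 0"
        by (simp add: Au_C4[where w=w, OF l] bcoef_def )
      have key: "u (Hv l k) * u (Hv l k) = u (Hv l k) * (S + b (l-1) k)
             \<and> u (Hv l k) * u (Bv l k) = u (Hv l k) \<and> u (Bv l k) * u (Bv l k) = u (Bv l k)"
        using B
      proof
        assume "u (Bv l k) = 0" thus ?thesis using c2 c4 by simp
      next
        assume "u (Bv l k) = 1"
        moreover hence "u (Hv l k) = S + b (l-1) k" using c1 c3 by simp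
        ultimately show ?thesis by simp
      qed
      have "(\<Sum>j<w (l-1). W (l-1) k j * G (Hv l k) (zv (l-1) j)) = u (Hv l k) * S"
        unfolding G_def S_def sum_distrib_left by (simp add: mult_ac)
      thus ?thesis using key unfolding G_def by (simp add: algebra_simps)
    qed
    have "sdp_feasible w n W b Ax bx mx Mmin Mmax p ny (Sc j) G u"
      unfolding sdp_feasible_def
    proof (intro conjI allI impI)
      show "psd_on (insert None (Some ` Vars w n)) (Ghat u G)" unfolding G_def by (rule psd_rank1)
    qed (use lf om diag in auto)
    thus "\<exists>G' u'. ereal (miqp_obj w n W b M i u) = ereal (sdp_obj w n W b M i G' u') \<and>
           sdp_feasible w n W b Ax bx mx Mmin Mmax p ny (Sc j) G' u'"
      using obj by metis
  qed
qed

end
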